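(* Let $p>5$ be a prime, $q=p^h$, and let $\mathcal{F}$ be the projective closure of $x^n+y^m=1$ over $\mathbb{F}_q$, where $m,n$ are positive integers with $n\ge m>2$ and $p\nmid mn$. If $\mathcal{F}$ is nonclassical with respect to the linear system $\Sigma_2$ of conics, then $p\mid(2n-1)(n+1)(n-2)(n-1)$ and $p\mid(2m-1)(m+1)(m-2)(m-1)$.
   Context: For a geometrically irreducible projective plane curve over $\mathbb{F}_q$ with function field $\overline{\mathbb{F}}_q(x,y)$, let $\varphi_0,\dots,\varphi_5$ be the monomials of degree 2 in $x,y,1$, $\tau$ separating and $D^{(k)}_\tau$ Hasse derivatives. The order sequence w.r.t. conics is the lexicographically smallest $\varepsilon_0<\dots<\varepsilon_5$ with $\det(D^{(\varepsilon_i)}_\tau\varphi_j)\neq0$; the curve is classical w.r.t. $\Sigma_2$ if $\varepsilon_i=i$ for all $i$, nonclassical otherwise. *)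

theory Defs
  imports "HOL-Computational_Algebra.Polynomial" "Jordan_Normal_Form.Determinant"
begin

definition is_subfield :: "'K::field set \<Rightarrow> bool" where
  "is_subfield k \<longleftrightarrow> 0 \<in> k \<and> 1 \<in> k \<and>
     (\<forall>a\<in>k. \<forall>b\<in>k. a + b \<in> k \<and> a - b \<in> k \<and> a * b \<in> k) \<and>
     (\<forall>a\<in>k. inverse a \<in> k)"

definition poly_over :: "'K::field set \<Rightarrow> 'K poly \<Rightarrow> bool" where
  "poly_over k P \<longleftrightarrow> (\<forall>i. coeff P i \<in> k)"

definition prime_subfield :: "'K::field set" where
  "prime_subfield = range (of_int :: int \<Rightarrow> 'K)"

definition alg_closed_subfield :: "'K::field set \<Rightarrow> bool" where
  "alg_closed_subfield k \<longleftrightarrow> is_subfield k \<and>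
     (\<forall>P. poly_over k P \<and> degree P \<ge> 1 \<longrightarrow> (\<exists>c\<in>k. poly P c = 0))"

definition algebraic_over :: "'K::field set \<Rightarrow> 'K \<Rightarrow> bool" where
  "algebraic_over F c \<longleftrightarrow> (\<exists>P. P \<noteq> 0 \<and> poly_over F P \<and> poly P c = 0)"

definition transcendental_over :: "'K::field set \<Rightarrow> 'K \<Rightarrow> bool" where
  "transcendental_over F c \<longleftrightarrow> \<not> algebraic_over F c"

inductive_set gen_field :: "'K::field set \<Rightarrow> 'K set" for S where
  base: "a \<in> S \<Longrightarrow> a \<in> gen_field S"
| zero: "0 \<in> gen_field S"
| one: "1 \<in> gen_field S"
| add: "a \<in> gen_field S \<Longrightarrow> b \<in> gen_field S \<Longrightarrow> a + b \<in> gen_field S"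
| uminus: "a \<in> gen_field S \<Longrightarrow> - a \<in> gen_field S"
| mult: "a \<in> gen_field S \<Longrightarrow> b \<in> gen_field S \<Longrightarrow> a * b \<in> gen_field S"
| inv: "a \<in> gen_field S \<Longrightarrow> inverse a \<in> gen_field S"

text \<open>'K is (a copy of) the function field \<open>\<bar>F_p(x,y)\<close> of the curve \<open>x^n + y^m = 1\<close>:
  it contains an algebraic closure \<open>k\<close> of the prime field \<open>F_p\<close>, \<open>x\<close> is transcendental
  over \<open>k\<close>, \<open>x^n + y^m = 1\<close>, and \<open>'K = k(x,y)\<close>.  (Note \<open>\<bar>F_q = \<bar>F_p\<close>.)\<close>
definition fermat_function_field ::
  "nat \<Rightarrow> nat \<Rightarrow> nat \<Rightarrow> 'K::field set \<Rightarrow> 'K \<Rightarrow> 'K \<Rightarrow> bool" where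
  "fermat_function_field p n m k x y \<longleftrightarrow>
     CHAR('K) = p \<and>
     alg_closed_subfield k \<and> (\<forall>c\<in>k. algebraic_over prime_subfield c) \<and>
     transcendental_over k x \<and>
     x ^ n + y ^ m = 1 \<and>
     gen_field (k \<union> {x, y}) = UNIV"

definition hasse_derivatives :: "'K::field set \<Rightarrow> 'K \<Rightarrow> (nat \<Rightarrow> 'K \<Rightarrow> 'K) \<Rightarrow> bool" where
  "hasse_derivatives k \<tau> D \<longleftrightarrow>
     (\<forall>f. D 0 f = f) \<and>
     (\<forall>i f g. D i (f + g) = D i f + D i g) \<and>
     (\<forall>i f g. D i (f * g) = (\<Sum>j\<le>i. D j f * D (i - j) g)) \<and>
     (\<forall>i c. i \<ge> 1 \<longrightarrow> c \<in> k \<longrightarrow> D i c = 0) \<and>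
     D 1 \<tau> = 1 \<and> (\<forall>i. i \<ge> 2 \<longrightarrow> D i \<tau> = 0)"

definition conic_monomials :: "'K::field \<Rightarrow> 'K \<Rightarrow> nat \<Rightarrow> 'K" where
  "conic_monomials x y j =
     [1, x, y, x\<^sup>2, x * y, y\<^sup>2] ! j"

definition conic_wronskian :: "(nat \<Rightarrow> 'K::field \<Rightarrow> 'K) \<Rightarrow> 'K \<Rightarrow> 'K \<Rightarrow> (nat \<Rightarrow> nat) \<Rightarrow> 'K" where
  "conic_wronskian D x y eps =
     det (mat 6 6 (\<lambda>(i, j). D (eps i) (conic_monomials x y j)))"

definition strictly_incr6 :: "(nat \<Rightarrow> nat) \<Rightarrow> bool" where
  "strictly_incr6 eps \<longleftrightarrow> (\<forall>i j. i < j \<longrightarrow> j < 6 \<longrightarrow> eps i < eps j)"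

definition lex_less6 :: "(nat \<Rightarrow> nat) \<Rightarrow> (nat \<Rightarrow> nat) \<Rightarrow> bool" where
  "lex_less6 a b \<longleftrightarrow> (\<exists>i<6. (\<forall>j<i. a j = b j) \<and> a i < b i)"

definition admissible_seq :: "(nat \<Rightarrow> 'K::field \<Rightarrow> 'K) \<Rightarrow> 'K \<Rightarrow> 'K \<Rightarrow> (nat \<Rightarrow> nat) \<Rightarrow> bool" where
  "admissible_seq D x y eps \<longleftrightarrow>
     strictly_incr6 eps \<and> conic_wronskian D x y eps \<noteq> 0"

text \<open>\<open>eps\<close> (only \<open>eps 0, ..., eps 5\<close> matter) is the order sequence w.r.t. conics:
  the lexicographically smallest admissible sequence.\<close>
definition conic_order_sequence :: "(nat \<Rightarrow> 'K::field \<Rightarrow> 'K) \<Rightarrow> 'K \<Rightarrow> 'K \<Rightarrow> (nat \<Rightarrow> nat) \<Rightarrow> bool" where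
  "conic_order_sequence D x y eps \<longleftrightarrow>
     admissible_seq D x y eps \<and>
     (\<forall>eps'. admissible_seq D x y eps' \<longrightarrow> \<not> lex_less6 eps' eps)"

definition nonclassical_conics :: "(nat \<Rightarrow> 'K::field \<Rightarrow> 'K) \<Rightarrow> 'K \<Rightarrow> 'K \<Rightarrow> bool" where
  "nonclassical_conics D x y \<longleftrightarrow>
     (\<exists>eps. conic_order_sequence D x y eps \<and> (\<exists>i<6. eps i \<noteq> i))"

end

theory Submission
  imports Defs
begin

definition Hs :: "(nat \<Rightarrow> 'a::field \<Rightarrow> 'a) \<Rightarrow> 'a \<Rightarrow> 'a poly" where
  "Hs D f = (\<Sum>i<6. monom (D i f) i)"

lemma coeff_Hs: "coeff (Hs D f) i = (if i < 6 then D i f else 0)"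
  unfolding Hs_def coeff_sum coeff_monom by (auto simp: sum.delta)

lemma hasse_D0: "hasse_derivatives k t D \<Longrightarrow> D 0 f = f"
  unfolding hasse_derivatives_def by auto
lemma hasse_add: "hasse_derivatives k t D \<Longrightarrow> D i (f + g) = D i f + D i g"
  unfolding hasse_derivatives_def by auto
lemma hasse_mult: "hasse_derivatives k t D \<Longrightarrow> D i (f * g) = (\<Sum>j\<le>i. D j f * D (i - j) g)"
  unfolding hasse_derivatives_def by auto
lemma hasse_const: "hasse_derivatives k t D \<Longrightarrow> i \<ge> 1 \<Longrightarrow> c \<in> k \<Longrightarrow> D i c = 0"
  unfolding hasse_derivatives_def by auto
lemma hasse_diff: "hasse_derivatives k t D \<Longrightarrow> D i (f - g) = D i f - D i g"
proof -
  assume h: "hasse_derivatives k t D"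
  have "D i f = D i ((f - g) + g)" by simp
  also have "\<dots> = D i (f - g) + D i g" using hasse_add[OF h] by blast
  finally show ?thesis by simp
qed

lemma D_mult_coeff:
  assumes h: "hasse_derivatives k t D" and "i \<le> 5"
  shows "D i (f * g) = coeff (Hs D f * Hs D g) i"
  using assms by (auto simp: hasse_mult[OF h] coeff_mult coeff_Hs intro!: sum.cong)

lemma D_power_coeff:
  assumes h: "hasse_derivatives k t D" and one: "1 \<in> k"
  shows "i \<le> 5 \<Longrightarrow> D i (f ^ j) = coeff ((Hs D f) ^ j) i"
proof (induction j arbitrary: i)
  case 0
  then show ?case using hasse_D0[OF h] hasse_const[OF h _ one] by (cases i) auto
next
  case (Suc j)
  have "D i (f ^ Suc j) = (\<Sum>l\<le>i. D l f * D (i - l) (f ^ j))"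
    using hasse_mult[OF h] by simp
  also have "\<dots> = (\<Sum>l\<le>i. coeff (Hs D f) l * coeff ((Hs D f) ^ j) (i - l))"
    using Suc by (auto simp: coeff_Hs intro!: sum.cong)
  also have "\<dots> = coeff ((Hs D f) ^ Suc j) i" by (simp add: coeff_mult)
  finally show ?case .
qed

lemma coeff_linear_power_gen:
  "coeff ([:a, 1:] ^ n) i = of_nat (n choose i) * (a::'a::comm_ring_1) ^ (n - i)"
proof (cases "i \<le> n")
  case True then show ?thesis using coeff_linear_poly_power[OF True, of a 1] by simp
next
  case False
  then have "degree ([:a, 1:] ^ n) < i" by (simp add: degree_linear_power)
  then show ?thesis using False by (simp add: coeff_eq_0 binomial_eq_0)
qed

lemma det_col_single:
  assumes j: "j < Suc n" and z: "\<And>i. 0 < i \<Longrightarrow> i < Suc n \<Longrightarrow> f (i, j) = 0"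
  shows "det (mat (Suc n) (Suc n) f) = f (0, j) * (-1)^j *
     det (mat n n (\<lambda>(a,b). f (Suc a, if b < j then b else Suc b)))"
proof -
  let ?A = "mat (Suc n) (Suc n) f"
  have A: "?A \<in> carrier_mat (Suc n) (Suc n)" by simp
  have "det ?A = (\<Sum>i<Suc n. ?A $$ (i,j) * cofactor ?A i j)"
    by (rule laplace_expansion_column[OF A j])
  also have "\<dots> = ?A $$ (0,j) * cofactor ?A 0 j + (\<Sum>i<n. ?A $$ (Suc i,j) * cofactor ?A (Suc i) j)"
    by (rule sum.lessThan_Suc_shift)
  also have "(\<Sum>i<n. ?A $$ (Suc i,j) * cofactor ?A (Suc i) j) = 0"
    using z j by (auto intro!: sum.neutral)
  also have "mat_delete ?A 0 j = mat n n (\<lambda>(a,b). f (Suc a, if b < j then b else Suc b))"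
    unfolding mat_delete_def using j by (intro eq_matI) auto
  then have "cofactor ?A 0 j = (-1)^j * det (mat n n (\<lambda>(a,b). f (Suc a, if b < j then b else Suc b)))"
    unfolding cofactor_def by simp
  finally show ?thesis using j by simp
qed

lemma det_col0:
  "det (mat (Suc n) (Suc n) f) = (\<Sum>i<Suc n. f (i, 0) * (-1)^i *
     det (mat n n (\<lambda>(a,b). f (if a < i then a else Suc a, Suc b))))"
proof -
  let ?A = "mat (Suc n) (Suc n) f"
  have A: "?A \<in> carrier_mat (Suc n) (Suc n)" by simp
  have "det ?A = (\<Sum>i<Suc n. ?A $$ (i,0) * cofactor ?A i 0)"
    by (rule laplace_expansion_column[OF A]) simp
  also have "\<dots> = (\<Sum>i<Suc n. f (i, 0) * (-1)^i *
     det (mat n n (\<lambda>(a,b). f (if a < i then a else Suc a, Suc b))))"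
  proof (rule sum.cong[OF refl])
    fix i assume i: "i \<in> {..<Suc n}"
    have "mat_delete ?A i 0 = mat n n (\<lambda>(a,b). f (if a < i then a else Suc a, Suc b))"
      unfolding mat_delete_def using i by (intro eq_matI) auto
    then show "?A $$ (i,0) * cofactor ?A i 0 = f (i, 0) * (-1)^i *
     det (mat n n (\<lambda>(a,b). f (if a < i then a else Suc a, Suc b)))"
      unfolding cofactor_def using i by simp
  qed
  finally show ?thesis .
qed

lemma det3:
  "det (mat 3 3 f) = f(0,0)*(f(1,1)*f(2,2) - f(2,1)*f(1,2)) - f(1,0)*(f(0,1)*f(2,2) - f(2,1)*f(0,2))
     + f(2,0)*(f(0,1)*f(1,2) - f(1,1)*f(0,2))"
proof -
  have d1: "det (mat (Suc 0) (Suc 0) g) = g (0,0)" for g :: "nat \<times> nat \<Rightarrow> 'a"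
    by (subst det_col0) (simp add: det_dim_zero)
  have d2: "det (mat (Suc (Suc 0)) (Suc (Suc 0)) g) = g (0,0) * g(1,1) - g(1,0) * g(0,1)" for g :: "nat \<times> nat \<Rightarrow> 'a"
    by (subst det_col0) (simp add: d1 lessThan_Suc)
  have "(3::nat) = Suc (Suc (Suc 0))" by simp
  then show ?thesis
    by (simp only:) (subst det_col0, simp add: d2 lessThan_Suc algebra_simps numeral_2_eq_2)
qed

lemma det6_reduce:
  fixes F :: "nat \<times> nat \<Rightarrow> 'a::comm_ring_1"
  assumes "F(0,0) = 1" "\<And>i. 0 < i \<Longrightarrow> i < 6 \<Longrightarrow> F(i,0) = 0"
    "F(1,1) = 1" "\<And>i. 1 < i \<Longrightarrow> i < 6 \<Longrightarrow> F(i,1) = 0"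
    "F(2,3) = 1" "\<And>i. 2 < i \<Longrightarrow> i < 6 \<Longrightarrow> F(i,3) = 0"
  shows "det (mat 6 6 F) = - (F(3,2)*(F(4,4)*F(5,5) - F(5,4)*F(4,5)) - F(4,2)*(F(3,4)*F(5,5) - F(5,4)*F(3,5))
     + F(5,2)*(F(3,4)*F(4,5) - F(4,4)*F(3,5)))"
proof -
  have "det (mat 6 6 F) = det (mat (Suc 5) (Suc 5) F)" by simp
  also have "\<dots> = det (mat 5 5 (\<lambda>(a,b). F (Suc a, Suc b)))"
    by (subst det_col_single[of 0]) (use assms in auto)
  also have "\<dots> = det (mat (Suc 4) (Suc 4) (\<lambda>(a,b). F (Suc a, Suc b)))" by simp
  also have "\<dots> = det (mat 4 4 (\<lambda>(a,b). F (Suc (Suc a), Suc (Suc b))))"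
    by (subst det_col_single[of 0]) (use assms in auto)
  also have "\<dots> = det (mat (Suc 3) (Suc 3) (\<lambda>(a,b). F (Suc (Suc a), Suc (Suc b))))" by simp
  also have "\<dots> = - det (mat 3 3 (\<lambda>(a,b). F (Suc (Suc (Suc a)), Suc (Suc (if b < 1 then b else Suc b)))))"
    by (subst det_col_single[of 1]) (use assms in \<open>auto simp: numeral_eq_Suc\<close>)
  also have "\<dots> = - (F(3,2)*(F(4,4)*F(5,5) - F(5,4)*F(4,5)) - F(4,2)*(F(3,4)*F(5,5) - F(5,4)*F(3,5))
     + F(5,2)*(F(3,4)*F(4,5) - F(4,4)*F(3,5)))"
    by (simp only: det3) (simp add: eval_nat_numeral)
  finally show ?thesis .
qed

lemma nonclassical_W0:
  assumes "nonclassical_conics D x y"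
  shows "conic_wronskian D x y (\<lambda>i. i) = 0"
proof (rule ccontr)
  assume W: "conic_wronskian D x y (\<lambda>i. i) \<noteq> 0"
  obtain eps i0 where cos: "conic_order_sequence D x y eps" and i0: "i0 < 6" "eps i0 \<noteq> i0"
    using assms unfolding nonclassical_conics_def by blast
  have adm: "admissible_seq D x y (\<lambda>i. i)"
    using W unfolding admissible_seq_def strictly_incr6_def by auto
  have nl: "\<not> lex_less6 (\<lambda>i. i) eps" using cos adm unfolding conic_order_sequence_def by blast
  have inc: "strictly_incr6 eps" using cos unfolding conic_order_sequence_def admissible_seq_def by blast
  have ge: "i < 6 \<Longrightarrow> eps i \<ge> i" for i
  proof (induction i)
    case 0 then show ?case by simp
  next
    case (Suc i)
    then have "eps i < eps (Suc i)" using inc unfolding strictly_incr6_def by auto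
    then show ?case using Suc by auto
  qed
  define i1 where "i1 = (LEAST i. i < 6 \<and> eps i \<noteq> i)"
  have i1: "i1 < 6 \<and> eps i1 \<noteq> i1" unfolding i1_def by (rule LeastI[of _ i0]) (use i0 in auto)
  have below: "\<forall>j<i1. eps j = j"
  proof (intro allI impI)
    fix j assume "j < i1"
    then have "\<not> (j < 6 \<and> eps j \<noteq> j)" unfolding i1_def by (rule not_less_Least)
    then show "eps j = j" using \<open>j < i1\<close> i1 by auto
  qed
  have "lex_less6 (\<lambda>i. i) eps"
    unfolding lex_less6_def using i1 below ge[of i1] by (intro exI[of _ i1]) auto
  then show False using nl by blast
qed

lemma sum_Dx:
  assumes h: "hasse_derivatives k x D" and "i \<ge> 1"
  shows "(\<Sum>j\<le>i. D j x * g (i - j)) = x * g i + g (i - 1)"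
proof -
  have "(\<Sum>j\<le>i. D j x * g (i - j)) = (\<Sum>j\<le>i. (if j = 0 then x * g i else 0) + (if j = 1 then g (i - 1) else 0))"
  proof (rule sum.cong[OF refl])
    fix j assume "j \<in> {..i}"
    show "D j x * g (i - j) = (if j = 0 then x * g i else 0) + (if j = 1 then g (i - 1) else 0)"
      using h unfolding hasse_derivatives_def by (cases "j = 0"; cases "j = 1"; auto)
  qed
  also have "\<dots> = x * g i + g (i - 1)" using assms(2) by (simp add: sum.distrib)
  finally show ?thesis .
qed

lemma wronskian_formula:
  fixes y :: "'a::field"
  assumes h: "hasse_derivatives k x D" and one: "1 \<in> k"
  defines "d \<equiv> \<lambda>i. D i y"
  shows "conic_wronskian D x y (\<lambda>i. i) =
    - (d 3 * ((x * d 4 + d 3) * (2*d 0*d 5 + 2*d 1*d 4 + 2*d 2*d 3) - (x * d 5 + d 4) * (2*d 0*d 4 + 2*d 1*d 3 + d 2*d 2))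
     - d 4 * ((x * d 3 + d 2) * (2*d 0*d 5 + 2*d 1*d 4 + 2*d 2*d 3) - (x * d 5 + d 4) * (2*d 0*d 3 + 2*d 1*d 2))
     + d 5 * ((x * d 3 + d 2) * (2*d 0*d 4 + 2*d 1*d 3 + d 2*d 2) - (x * d 4 + d 3) * (2*d 0*d 3 + 2*d 1*d 2)))"
proof -
  define F where "F = (\<lambda>(i,j). D ((\<lambda>i. i) i) (conic_monomials x y j))"
  have W: "conic_wronskian D x y (\<lambda>i. i) = det (mat 6 6 F)"
    unfolding conic_wronskian_def F_def by simp
  have D0: "D 0 f = f" for f using hasse_D0[OF h] .
  have Dc: "i \<ge> 1 \<Longrightarrow> D i 1 = 0" for i using hasse_const[OF h _ one] by blast
  have Dx: "D 1 x = 1" "i \<ge> 2 \<Longrightarrow> D i x = 0" for i using h unfolding hasse_derivatives_def by auto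
  have Dxx: "i \<ge> 1 \<Longrightarrow> D i (x^2) = x * D i x + D (i - 1) x" for i
    unfolding power2_eq_square hasse_mult[OF h] by (rule sum_Dx[OF h])
  have Dxy: "i \<ge> 1 \<Longrightarrow> D i (x*y) = x * d i + d (i - 1)" for i
    unfolding d_def hasse_mult[OF h] by (rule sum_Dx[OF h])
  have Dyy: "D i (y^2) = (\<Sum>j\<le>i. d j * d (i - j))" for i
    unfolding d_def power2_eq_square hasse_mult[OF h] ..
  have cm: "conic_monomials x y 0 = 1" "conic_monomials x y 1 = x" "conic_monomials x y 2 = y"
     "conic_monomials x y 3 = x^2" "conic_monomials x y 4 = x*y" "conic_monomials x y 5 = y^2"
    unfolding conic_monomials_def by simp_all
  have R6: "det (mat 6 6 F) = - (F(3,2)*(F(4,4)*F(5,5) - F(5,4)*F(4,5)) - F(4,2)*(F(3,4)*F(5,5) - F(5,4)*F(3,5))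
     + F(5,2)*(F(3,4)*F(4,5) - F(4,4)*F(3,5)))"
    using Dx(1) cm(2) by (intro det6_reduce) (auto simp: F_def cm D0 Dc Dx Dxx)
  have F2: "F(i,2) = d i" for i by (simp add: F_def cm d_def)
  have F4: "F(3,4) = x * d 3 + d 2" "F(4,4) = x * d 4 + d 3" "F(5,4) = x * d 5 + d 4"
    by (simp_all add: F_def cm Dxy)
  have F5': "F(i,5) = (\<Sum>j\<le>i. d j * d (i - j))" for i by (simp add: F_def cm Dyy)
  have F5: "F(3,5) = 2*d 0*d 3 + 2*d 1*d 2" "F(4,5) = 2*d 0*d 4 + 2*d 1*d 3 + d 2*d 2"
    "F(5,5) = 2*d 0*d 5 + 2*d 1*d 4 + 2*d 2*d 3"
    unfolding F5' by (simp_all add: eval_nat_numeral sum.atMost_Suc algebra_simps)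
  show ?thesis unfolding W R6 by (simp only: F2 F4 F5)
qed

lemma Hs_x: assumes h: "hasse_derivatives k x D" shows "Hs D x = [:x, 1:]"
proof (rule poly_eqI)
  fix i
  show "coeff (Hs D x) i = coeff [:x, 1:] i"
    using h unfolding coeff_Hs hasse_derivatives_def
    by (cases i; cases "i = 1"; auto simp: coeff_pCons split: nat.splits)
qed

lemma series_eqs:
  assumes h: "hasse_derivatives k x D" and one: "1 \<in> k" and ym: "y^m = 1 - x^n" and m: "m \<ge> 1"
    and kk: "kk \<le> 4"
  defines "d \<equiv> \<lambda>i. D i y"
    and "r \<equiv> \<lambda>i. (if i = 0 then 1 else 0) - of_nat (n choose i) * x^(n-i)"
  shows "(\<Sum>i\<le>kk. d i * of_nat (Suc (kk-i)) * r (Suc (kk-i)))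
        = of_nat m * (\<Sum>i\<le>kk. r i * of_nat (Suc (kk-i)) * d (Suc (kk-i)))"
proof -
  define P where "P = Hs D y"
  have rP: "coeff (P^m) i = r i" if "i \<le> 5" for i
  proof -
    have "coeff (P^m) i = D i (y^m)" unfolding P_def using D_power_coeff[OF h one that] by simp
    also have "\<dots> = D i 1 - D i (x^n)" unfolding ym by (rule hasse_diff[OF h])
    also have "D i 1 = (if i = 0 then 1 else 0)"
      using hasse_D0[OF h] hasse_const[OF h _ one] by (cases i) auto
    also have "D i (x^n) = coeff ([:x, 1:]^n) i"
      using D_power_coeff[OF h one that] Hs_x[OF h] by simp
    finally show ?thesis unfolding r_def coeff_linear_power_gen .
  qed
  have dP: "coeff P i = d i" if "i < 6" for i unfolding P_def d_def coeff_Hs using that by simp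
  obtain m' where m': "m = Suc m'" using m by (cases m) auto
  have id: "P * pderiv (P^m) = smult (of_nat m) (P^m * pderiv P)"
    unfolding m' pderiv_power_Suc by (simp add: algebra_simps)
  have "coeff (P * pderiv (P^m)) kk = (\<Sum>i\<le>kk. d i * of_nat (Suc (kk-i)) * r (Suc (kk-i)))"
    unfolding coeff_mult coeff_pderiv using kk by (intro sum.cong) (auto simp: dP rP)
  moreover have S: "(\<Sum>i\<le>kk. coeff (P^m) i * (of_nat (Suc (kk-i)) * coeff P (Suc (kk-i))))
     = (\<Sum>i\<le>kk. r i * of_nat (Suc (kk-i)) * d (Suc (kk-i)))"
    using kk by (intro sum.cong) (simp_all add: dP rP mult.assoc del: of_nat_Suc of_nat_diff)
  moreover have "coeff (smult (of_nat m) (P^m * pderiv P)) kk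
      = of_nat m * (\<Sum>i\<le>kk. coeff (P^m) i * (of_nat (Suc (kk-i)) * coeff P (Suc (kk-i))))"
    unfolding coeff_smult coeff_mult coeff_pderiv ..
  ultimately show ?thesis using id by simp
qed

lemma step_rec:
  fixes d r h \<rho> :: "nat \<Rightarrow> 'a::field"
  assumes M: "M \<noteq> 0" and K: "of_nat (Suc kk) \<noteq> (0::'a)" and w: "w \<noteq> 0" and y: "y \<noteq> 0" and z: "z \<noteq> 0"
   and hdef: "\<And>i. h i = d i * z^i / y"
   and rdef: "\<And>i. \<rho> i = r i * z^i / w"
   and r0: "r 0 = w"
   and eq: "(\<Sum>i\<le>kk. d i * of_nat (Suc (kk-i)) * r (Suc (kk-i)))
          = M * (\<Sum>i\<le>kk. r i * of_nat (Suc (kk-i)) * d (Suc (kk-i)))"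
  shows "h (Suc kk) = ((\<Sum>i\<le>kk. h i * of_nat (Suc (kk-i)) * \<rho> (Suc (kk-i)))
          - M * (\<Sum>i\<in>{1..kk}. \<rho> i * of_nat (Suc (kk-i)) * h (Suc (kk-i)))) / (of_nat (Suc kk) * M)"
proof -
  define A where "A = y * w / z^(Suc kk)"
  have dh: "d i = h i * y / z^i" for i using hdef[of i] y z by (simp add: field_simps)
  have rr: "r i = \<rho> i * w / z^i" for i using rdef[of i] w z by (simp add: field_simps)
  have zp: "z^(Suc kk) = z^i * z^(Suc (kk-i))" if "i \<le> kk" for i
    using that by (simp add: power_add[symmetric])
  have zp2: "z^(Suc kk) = z^i * z^(Suc kk - i)" if "i \<le> Suc kk" for i
    using that by (simp add: power_add[symmetric])
  have L: "(\<Sum>i\<le>kk. d i * of_nat (Suc (kk-i)) * r (Suc (kk-i)))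
      = A * (\<Sum>i\<le>kk. h i * of_nat (Suc (kk-i)) * \<rho> (Suc (kk-i)))"
    unfolding sum_distrib_left
  proof (rule sum.cong[OF refl])
    fix i assume "i \<in> {..kk}"
    then have "z^(Suc kk) = z^i * z^(Suc (kk-i))" using zp by auto
    then show "d i * of_nat (Suc (kk-i)) * r (Suc (kk-i)) = A * (h i * of_nat (Suc (kk-i)) * \<rho> (Suc (kk-i)))"
      unfolding A_def dh rr using z by (simp add: field_simps)
  qed
  have split: "{..kk} = insert 0 {1..kk}" by auto
  have R: "(\<Sum>i\<le>kk. r i * of_nat (Suc (kk-i)) * d (Suc (kk-i)))
     = w * of_nat (Suc kk) * d (Suc kk) + A * (\<Sum>i\<in>{1..kk}. \<rho> i * of_nat (Suc (kk-i)) * h (Suc (kk-i)))"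
    unfolding split
  proof (subst sum.insert)
    show "finite {1..kk}" by simp
    show "0 \<notin> {1..kk}" by simp
    have "(\<Sum>i\<in>{1..kk}. r i * of_nat (Suc (kk-i)) * d (Suc (kk-i)))
        = A * (\<Sum>i\<in>{1..kk}. \<rho> i * of_nat (Suc (kk-i)) * h (Suc (kk-i)))"
      unfolding sum_distrib_left
    proof (rule sum.cong[OF refl])
      fix i assume "i \<in> {1..kk}"
      then have "z^(Suc kk) = z^i * z^(Suc (kk-i))" using zp by auto
      then show "r i * of_nat (Suc (kk-i)) * d (Suc (kk-i)) = A * (\<rho> i * of_nat (Suc (kk-i)) * h (Suc (kk-i)))"
        unfolding A_def dh rr using z by (simp add: field_simps)
    qed
    then show "r 0 * of_nat (Suc (kk - 0)) * d (Suc (kk - 0)) +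
      (\<Sum>i\<in>{1..kk}. r i * of_nat (Suc (kk-i)) * d (Suc (kk-i))) =
      w * of_nat (Suc kk) * d (Suc kk) + A * (\<Sum>i\<in>{1..kk}. \<rho> i * of_nat (Suc (kk-i)) * h (Suc (kk-i)))"
      using r0 by simp
  qed
  have dK: "w * d (Suc kk) = A * h (Suc kk)" unfolding A_def dh using z by (simp add: field_simps)
  have A0: "A \<noteq> 0" unfolding A_def using y w z by simp
  define S1 where "S1 = (\<Sum>i\<le>kk. h i * of_nat (Suc (kk-i)) * \<rho> (Suc (kk-i)))"
  define S2 where "S2 = (\<Sum>i\<in>{1..kk}. \<rho> i * of_nat (Suc (kk-i)) * h (Suc (kk-i)))"
  have "A * S1 = M * (of_nat (Suc kk) * (A * h (Suc kk)) + A * S2)"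
    using eq unfolding L R S1_def S2_def dK[symmetric] by (simp add: algebra_simps)
  then have "A * S1 = A * (M * of_nat (Suc kk) * h (Suc kk) + M * S2)" by (simp add: algebra_simps)
  then have "S1 = M * of_nat (Suc kk) * h (Suc kk) + M * S2" using A0 by simp
  then have E: "S1 - M * S2 = (of_nat (Suc kk) * M) * h (Suc kk)" by (simp add: algebra_simps del: of_nat_Suc)
  have KM: "of_nat (Suc kk) * M \<noteq> 0" using M K by simp
  have "h (Suc kk) = (S1 - M * S2) / (of_nat (Suc kk) * M)"
    unfolding E using KM by (simp del: of_nat_Suc)
  then show ?thesis unfolding S1_def S2_def .
qed

definition rhoP :: "(nat \<Rightarrow> 'a) \<Rightarrow> nat \<Rightarrow> 'a::field poly" where
  "rhoP c j = (if j = 0 then 1 else smult (- c j) ([:0,1:] * [:1,-1:]^(j-1)))"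

function HPf :: "(nat \<Rightarrow> 'a::field) \<Rightarrow> 'a \<Rightarrow> nat \<Rightarrow> 'a poly" where
  "HPf c M 0 = 1"
| "HPf c M (Suc kk) = smult (inverse (of_nat (Suc kk) * M))
     ((\<Sum>i\<le>kk. HPf c M i * smult (of_nat (Suc (kk-i))) (rhoP c (Suc (kk-i))))
      - smult M (\<Sum>i\<in>{1..kk}. rhoP c i * smult (of_nat (Suc (kk-i))) (HPf c M (Suc (kk-i)))))"
  by pat_completeness auto
termination by (relation "measure (\<lambda>(c,M,k). k)") auto

declare HPf.simps[simp del]

definition Phi :: "(nat \<Rightarrow> 'a::comm_ring_1) \<Rightarrow> 'a" where
  "Phi h = h 3 * (h 3 * (2*h 1*h 4 + 2*h 2*h 3) - (2*h 1*h 3 + h 2*h 2) * h 4)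
         - h 2 * (h 4 * (2*h 1*h 4 + 2*h 2*h 3) - (2*h 1*h 3 + h 2*h 2) * h 5)
         + (2*h 1*h 2) * (h 4 * h 4 - h 3 * h 5)"

lemma Phi_cong: "(\<And>i. 1 \<le> i \<Longrightarrow> i \<le> 5 \<Longrightarrow> f i = g i) \<Longrightarrow> Phi f = Phi g"
  unfolding Phi_def by simp

lemma Phi_scale: "Phi (\<lambda>i. t * f i) = t^4 * Phi f"
  unfolding Phi_def by (simp add: algebra_simps power4_eq_xxxx)

lemma poly_Phi: "poly (Phi f) x = Phi (\<lambda>i. poly (f i) x)"
  unfolding Phi_def by simp


lemma poly_HPf:
  fixes h \<rho> :: "nat \<Rightarrow> 'a::field"
  assumes h0: "h 0 = 1"
    and rec: "\<And>kk. kk \<le> 4 \<Longrightarrow> h (Suc kk) = ((\<Sum>i\<le>kk. h i * of_nat (Suc (kk-i)) * \<rho> (Suc (kk-i)))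
          - M * (\<Sum>i\<in>{1..kk}. \<rho> i * of_nat (Suc (kk-i)) * h (Suc (kk-i)))) / (of_nat (Suc kk) * M)"
    and rho: "\<And>j. j \<le> 5 \<Longrightarrow> \<rho> j = poly (rhoP c j) s"
  shows "K \<le> 5 \<Longrightarrow> poly (HPf c M K) s = h K"
proof (induction K rule: less_induct)
  case (less K)
  show ?case
  proof (cases K)
    case 0 then show ?thesis using h0 by (simp add: HPf.simps)
  next
    case (Suc kk)
    have S1: "(\<Sum>i\<le>kk. poly (HPf c M i * smult (of_nat (Suc (kk-i))) (rhoP c (Suc (kk-i)))) s)
       = (\<Sum>i\<le>kk. h i * of_nat (Suc (kk-i)) * \<rho> (Suc (kk-i)))"
    proof (rule sum.cong[OF refl])
      fix i assume i: "i \<in> {..kk}"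
      have "poly (HPf c M i) s = h i" using less.IH[of i] i Suc less.prems by auto
      moreover have "\<rho> (Suc (kk-i)) = poly (rhoP c (Suc (kk-i))) s" using rho Suc less.prems by auto
      ultimately show "poly (HPf c M i * smult (of_nat (Suc (kk-i))) (rhoP c (Suc (kk-i)))) s
         = h i * of_nat (Suc (kk-i)) * \<rho> (Suc (kk-i))" by (simp del: of_nat_Suc)
    qed
    have S2: "(\<Sum>i\<in>{1..kk}. poly (rhoP c i * smult (of_nat (Suc (kk-i))) (HPf c M (Suc (kk-i)))) s)
       = (\<Sum>i\<in>{1..kk}. \<rho> i * of_nat (Suc (kk-i)) * h (Suc (kk-i)))"
    proof (rule sum.cong[OF refl])
      fix i assume i: "i \<in> {1..kk}"
      have "poly (HPf c M (Suc (kk-i))) s = h (Suc (kk-i))" using less.IH[of "Suc (kk-i)"] i Suc less.prems by auto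
      moreover have "\<rho> i = poly (rhoP c i) s" using rho i Suc less.prems by auto
      ultimately show "poly (rhoP c i * smult (of_nat (Suc (kk-i))) (HPf c M (Suc (kk-i)))) s
         = \<rho> i * of_nat (Suc (kk-i)) * h (Suc (kk-i))" by (simp del: of_nat_Suc)
    qed
    have "poly (HPf c M K) s = inverse (of_nat (Suc kk) * M) *
       ((\<Sum>i\<le>kk. h i * of_nat (Suc (kk-i)) * \<rho> (Suc (kk-i)))
          - M * (\<Sum>i\<in>{1..kk}. \<rho> i * of_nat (Suc (kk-i)) * h (Suc (kk-i))))"
      unfolding Suc HPf.simps(2)[of c M kk] poly_smult poly_diff poly_sum S1 S2 ..
    also have "\<dots> = h K"
    proof -
      have kk4: "kk \<le> 4" using less.prems Suc by simp
      show ?thesis unfolding Suc rec[OF kk4] divide_inverse by (rule mult.commute)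
    qed
    finally show ?thesis .
  qed
qed

context
  fixes k :: "'a::field set"
  assumes sf: "is_subfield k"
begin

lemma sf0: "0 \<in> k" and sf1: "1 \<in> k" using sf unfolding is_subfield_def by auto
lemma sf_add: "a \<in> k \<Longrightarrow> b \<in> k \<Longrightarrow> a + b \<in> k" using sf unfolding is_subfield_def by auto
lemma sf_diff: "a \<in> k \<Longrightarrow> b \<in> k \<Longrightarrow> a - b \<in> k" using sf unfolding is_subfield_def by auto
lemma sf_mult: "a \<in> k \<Longrightarrow> b \<in> k \<Longrightarrow> a * b \<in> k" using sf unfolding is_subfield_def by auto
lemma sf_inverse: "a \<in> k \<Longrightarrow> inverse a \<in> k" using sf unfolding is_subfield_def by auto
lemma sf_uminus: "a \<in> k \<Longrightarrow> - a \<in> k" using sf_diff[OF sf0, of a] by simp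
lemma sf_of_nat: "of_nat n \<in> k"
  by (induction n) (simp_all add: sf0 sf1 sf_add)
lemma sf_sum: "(\<And>a. a \<in> A \<Longrightarrow> f a \<in> k) \<Longrightarrow> sum f A \<in> k"
proof (induction A rule: infinite_finite_induct)
  case (infinite A) then show ?case by (simp add: sf0)
next
  case empty then show ?case by (simp add: sf0)
next
  case (insert a A) then show ?case by (simp add: sf_add)
qed

lemma po_coeffI: "(\<And>i. coeff p i \<in> k) \<Longrightarrow> poly_over k p" unfolding poly_over_def by blast
lemma po_coeffD: "poly_over k p \<Longrightarrow> coeff p i \<in> k" unfolding poly_over_def by blast

lemma po_0: "poly_over k 0" by (rule po_coeffI) (simp add: sf0)
lemma po_pCons: "a \<in> k \<Longrightarrow> poly_over k p \<Longrightarrow> poly_over k (pCons a p)"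
  by (rule po_coeffI) (auto simp: coeff_pCons sf0 po_coeffD split: nat.splits)
lemma po_pConsD: "poly_over k (pCons a p) \<Longrightarrow> a \<in> k \<and> poly_over k p"
  unfolding poly_over_def by (metis coeff_pCons_0 coeff_pCons_Suc)
lemma po_1: "poly_over k 1" using po_pCons[OF sf1 po_0] by (simp add: one_pCons)
lemma po_add: "poly_over k p \<Longrightarrow> poly_over k q \<Longrightarrow> poly_over k (p + q)"
  by (rule po_coeffI) (simp add: sf_add po_coeffD)
lemma po_diff: "poly_over k p \<Longrightarrow> poly_over k q \<Longrightarrow> poly_over k (p - q)"
  by (rule po_coeffI) (simp add: sf_diff po_coeffD)
lemma po_smult: "a \<in> k \<Longrightarrow> poly_over k q \<Longrightarrow> poly_over k (smult a q)"
  by (rule po_coeffI) (simp add: sf_mult po_coeffD)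
lemma po_mult: "poly_over k p \<Longrightarrow> poly_over k q \<Longrightarrow> poly_over k (p * q)"
  by (rule po_coeffI) (simp add: coeff_mult sf_mult po_coeffD sf_sum)
lemma po_power: "poly_over k p \<Longrightarrow> poly_over k (p ^ n)"
  by (induction n) (simp_all add: po_1 po_mult)
lemma po_sum: "(\<And>a. a \<in> A \<Longrightarrow> poly_over k (f a)) \<Longrightarrow> poly_over k (sum f A)"
  by (rule po_coeffI) (simp add: coeff_sum sf_sum po_coeffD)
lemma po_pcompose: "poly_over k q \<Longrightarrow> poly_over k p \<Longrightarrow> poly_over k (pcompose p q)"
proof (induction p rule: pCons_induct)
  case 0 then show ?case by (simp add: po_0)
next
  case (pCons a p)
  then show ?case using po_pConsD[OF pCons.prems(2)]
    by (simp add: pcompose_pCons po_add po_mult po_pCons po_0)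
qed
lemma po_monom: "a \<in> k \<Longrightarrow> poly_over k (monom a n)"
  by (rule po_coeffI) (simp add: coeff_monom sf0)

lemma po_rhoP: assumes c: "\<And>j. c j \<in> k" shows "poly_over k (rhoP c j)"
proof (cases "j = 0")
  case True then show ?thesis unfolding rhoP_def by (simp add: po_1)
next
  case False
  then show ?thesis unfolding rhoP_def if_not_P[OF False]
    by (intro po_smult sf_uminus po_mult po_power po_pCons sf0 sf1 po_0 c)
qed

lemma po_HPf:
  assumes c: "\<And>j. c j \<in> k" and M: "M \<in> k"
  shows "poly_over k (HPf c M K)"
proof (induction K rule: less_induct)
  case (less K)
  show ?case
  proof (cases K)
    case 0 then show ?thesis by (simp add: HPf.simps po_1)
  next
    case (Suc kk)
    have a: "poly_over k (HPf c M i)" if "i \<le> kk" for i using less Suc that by auto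
    have b: "poly_over k (HPf c M (Suc (kk - i)))" if "i \<in> {1..kk}" for i using less Suc that by auto
    show ?thesis unfolding Suc HPf.simps(2)[of c M kk]
      by (intro po_smult po_diff po_sum po_mult sf_inverse sf_mult sf_of_nat M a b po_rhoP c) auto
  qed
qed

lemma trans_zero:
  assumes "transcendental_over k x" "poly_over k P" "poly P x = 0"
  shows "P = 0"
  using assms unfolding transcendental_over_def algebraic_over_def by blast

lemma trans_pow_zero:
  assumes tr: "transcendental_over k x" and n: "n > 0" and Q: "poly_over k Q" and z: "poly Q (x^n) = 0"
  shows "Q = 0"
proof -
  have "pcompose Q (monom 1 n) = 0"
    by (rule trans_zero[OF tr]) (auto intro: po_pcompose po_monom sf1 Q simp: poly_pcompose poly_monom z)
  then show ?thesis by (rule pcompose_eq_0) (use n in \<open>simp add: degree_monom_eq\<close>)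
qed

end

lemma sum_single:
  assumes "finite A" "a \<in> A" "\<And>i. i \<in> A \<Longrightarrow> i \<noteq> a \<Longrightarrow> f i = 0"
  shows "sum f A = f a"
proof -
  have "sum f A = f a + sum f (A - {a})" using assms by (simp add: sum.remove)
  also have "sum f (A - {a}) = 0" using assms by (intro sum.neutral) auto
  finally show ?thesis by simp
qed

lemma pderiv_sum': "pderiv (sum f A) = (\<Sum>a\<in>A. pderiv (f a))"
  by (induction A rule: infinite_finite_induct) (simp_all add: pderiv_add)

lemma rhoP_at1: "poly (rhoP c j) (1::'a::field) = (if j = 0 then 1 else if j = 1 then - c 1 else 0)"
  unfolding rhoP_def by (cases j) (auto simp: power_0_left)

lemma rhoP_at0: "poly (rhoP c j) (0::'a::field) = (if j = 0 then 1 else 0)"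
  unfolding rhoP_def by auto

lemma rhoP_d0: "j \<ge> 1 \<Longrightarrow> poly (pderiv (rhoP c j)) (0::'a::field) = - c j"
  unfolding rhoP_def by (simp add: pderiv_smult pderiv_mult pderiv_pCons)

lemma HPf_at0: "K \<ge> 1 \<Longrightarrow> poly (HPf c M K) (0::'a::field) = 0"
proof -
  assume "K \<ge> 1"
  then obtain kk where K: "K = Suc kk" by (cases K) auto
  show ?thesis unfolding K HPf.simps(2)[of c M kk] poly_smult poly_diff poly_sum
    by (simp add: rhoP_at0)
qed

lemma HPf_at1: "poly (HPf c M (Suc kk)) (1::'a::field) = inverse (of_nat (Suc kk) * M) *
   (poly (HPf c M kk) 1 * (- c 1) - M * (- c 1 * of_nat kk * poly (HPf c M kk) 1))"
proof -
  have S1: "(\<Sum>i\<le>kk. poly (HPf c M i * smult (of_nat (Suc (kk-i))) (rhoP c (Suc (kk-i)))) 1)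
      = poly (HPf c M kk) 1 * (- c 1)"
    by (subst sum_single[of _ kk]) (auto simp: rhoP_at1)
  have S2: "(\<Sum>i\<in>{1..kk}. poly (rhoP c i * smult (of_nat (Suc (kk-i))) (HPf c M (Suc (kk-i)))) 1)
      = - c 1 * of_nat kk * poly (HPf c M kk) 1"
  proof (cases kk)
    case 0 then show ?thesis by simp
  next
    case (Suc k')
    then show ?thesis by (subst sum_single[of _ 1]) (auto simp: rhoP_at1)
  qed
  show ?thesis unfolding HPf.simps(2)[of c M kk] poly_smult poly_diff poly_sum S1 S2 ..
qed

lemma HPf_d0: "poly (pderiv (HPf c M (Suc kk))) (0::'a::field) = inverse (of_nat (Suc kk) * M) *
   (of_nat (Suc kk) * (- c (Suc kk)))"
proof -
  have H0: "poly (HPf c M i) 0 = (if i = 0 then 1 else 0)" for i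
    using HPf_at0[of i c M] by (cases i) (auto simp: HPf.simps(1))
  have S1: "(\<Sum>i\<le>kk. poly (pderiv (HPf c M i * smult (of_nat (Suc (kk-i))) (rhoP c (Suc (kk-i))))) 0)
      = of_nat (Suc kk) * (- c (Suc kk))"
    by (subst sum_single[of _ 0]) (auto simp: pderiv_mult pderiv_smult H0 rhoP_at0 rhoP_d0)
  have S2: "(\<Sum>i\<in>{1..kk}. poly (pderiv (rhoP c i * smult (of_nat (Suc (kk-i))) (HPf c M (Suc (kk-i))))) 0)
      = 0"
    by (intro sum.neutral) (auto simp: pderiv_mult pderiv_smult H0 rhoP_at0)
  show ?thesis unfolding HPf.simps(2)[of c M kk] pderiv_smult pderiv_diff pderiv_sum' poly_smult poly_diff poly_sum S1 S2
    by simp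
qed

lemma det_scale:
  fixes x y v :: "'a::field"
  assumes d: "\<And>i. d i = y * h i * v^i" and h0: "h 0 = 1"
  shows "(d 3 * ((x * d 4 + d 3) * (2*d 0*d 5 + 2*d 1*d 4 + 2*d 2*d 3) - (x * d 5 + d 4) * (2*d 0*d 4 + 2*d 1*d 3 + d 2*d 2))
     - d 4 * ((x * d 3 + d 2) * (2*d 0*d 5 + 2*d 1*d 4 + 2*d 2*d 3) - (x * d 5 + d 4) * (2*d 0*d 3 + 2*d 1*d 2))
     + d 5 * ((x * d 3 + d 2) * (2*d 0*d 4 + 2*d 1*d 3 + d 2*d 2) - (x * d 4 + d 3) * (2*d 0*d 3 + 2*d 1*d 2)))
     = y^4 * v^11 * Phi h"
  unfolding d Phi_def h0 by (simp add: algebra_simps eval_nat_numeral)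

lemma Phi_weight: "Phi (\<lambda>i. u^i * f i) = u^11 * Phi f"
  unfolding Phi_def by (simp add: algebra_simps eval_nat_numeral)

lemma Phi_C:
  fixes M :: "'a::comm_ring_1"
  shows "Phi (\<lambda>i. if i = 1 then -120 else if i = 2 then 60*(1-M) else if i = 3 then -20*(1-M)*(1-2*M)
     else if i = 4 then 5*(1-M)*(1-2*M)*(1-3*M) else -(1-M)*(1-2*M)*(1-3*M)*(1-4*M))
   = -48000*(1-M)^4*(1+M)*(1-2*M)*(2-M)"
  unfolding Phi_def by (simp add: algebra_simps eval_nat_numeral)

lemma Phi_E:
  fixes N :: "'a::comm_ring_1"
  shows "Phi (\<lambda>i. if i = 1 then 120*N else if i = 2 then 60*N*(N-1) else if i = 3 then 20*N*(N-1)*(N-2)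
     else if i = 4 then 5*N*(N-1)*(N-2)*(N-3) else N*(N-1)*(N-2)*(N-3)*(N-4))
   = 48000*N^4*(N-1)^4*(N+1)*(N-2)*(2*N-1)"
  unfolding Phi_def by (simp add: algebra_simps eval_nat_numeral)

lemma cN_rec: "of_nat (Suc j) * (of_nat (n choose Suc j) :: 'a::comm_ring_1) = (of_nat n - of_nat j) * of_nat (n choose j)"
proof (cases "j \<le> n")
  case True
  have "Suc j * (n choose Suc j) = (n - j) * (n choose j)"
    using binomial_absorption[of j n] binomial_absorb_comp[of n j] by simp
  then have "(of_nat (Suc j * (n choose Suc j)) :: 'a) = of_nat ((n - j) * (n choose j))" by simp
  then show ?thesis using True by (simp only: of_nat_mult of_nat_diff)
next
  case False then show ?thesis by (simp add: binomial_eq_0)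
qed

lemma astep:
  fixes a :: "nat \<Rightarrow> 'a::field"
  assumes rec: "a (Suc kk) = inverse (of_nat (Suc kk) * M) * (a kk * (-N) - M * (-N * of_nat kk * a kk))"
    and prev: "a kk = (N*v)^kk * t * Ck"
    and Crel: "of_nat (Suc kk) * Ck1 = - Ck * (1 - of_nat kk * M)"
    and Mv: "M * v = 1" and K: "of_nat (Suc kk) \<noteq> (0::'a)"
  shows "a (Suc kk) = (N*v)^(Suc kk) * t * Ck1"
proof -
  have iv: "inverse (of_nat (Suc kk) * M) = inverse (of_nat (Suc kk)) * v"
    using inverse_unique[OF Mv] by (simp add: inverse_mult_distrib del: of_nat_Suc)
  have "a (Suc kk) = inverse (of_nat (Suc kk)) * ((N*v)^(Suc kk) * t * (- Ck * (1 - of_nat kk * M)))"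
    unfolding rec iv prev by (simp add: algebra_simps)
  also have "\<dots> = (N*v)^(Suc kk) * t * Ck1"
    unfolding Crel[symmetric] using K by (simp add: field_simps)
  finally show ?thesis .
qed

lemma no_small_dvd:
  assumes p: "prime (p::nat)" "p > 5" and d: "p dvd 2^a * 3^b * 5^c"
  shows False
proof -
  have "p dvd 2^a \<or> p dvd 3^b \<or> p dvd 5^c" using d p(1) by (simp add: prime_dvd_mult_iff)
  then have "p dvd 2 \<or> p dvd 3 \<or> p dvd 5" using p(1) prime_dvd_power by blast
  then show False using p(2) by (auto dest: dvd_imp_le)
qed

lemma po_Phi:
  assumes sf: "is_subfield k" and f: "\<And>i. poly_over k (f i)"
  shows "poly_over k (Phi f)"
  unfolding Phi_def mult_2
  by (intro po_add[OF sf] po_diff[OF sf] po_mult[OF sf] f)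

lemma final_M:
  fixes N M :: "'a::field" and cN :: "nat \<Rightarrow> 'a"
  assumes Q0: "Phi (\<lambda>i. HPf cN M i) = 0" and N0: "N \<noteq> 0" and M0: "M \<noteq> 0"
    and nz120: "(120::'a) \<noteq> 0" and nz48000: "(48000::'a) \<noteq> 0"
    and smallnz: "\<And>j. 0 < j \<Longrightarrow> j \<le> 5 \<Longrightarrow> (of_nat j :: 'a) \<noteq> 0"
    and cN1: "cN 1 = N"
  shows "(M-1)*(M+1)*(M-2)*(2*M-1) = 0"
proof -
  define a where "a = (\<lambda>i. poly (HPf cN M i) (1::'a))"
  have Pa: "Phi a = 0" unfolding a_def using arg_cong[OF Q0, of "\<lambda>q. poly q 1"] by (simp add: poly_Phi)
  define vM where "vM = inverse M"
  have Mv: "M * vM = 1" unfolding vM_def using M0 by simp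
  define t where "t = inverse (120::'a)"
  define C where "C = (\<lambda>i::nat. if i = 0 then 120 else if i = 1 then -120 else if i = 2 then 60*(1-M)
     else if i = 3 then -20*(1-M)*(1-2*M)
     else if i = 4 then 5*(1-M)*(1-2*M)*(1-3*M) else -(1-M)*(1-2*M)*(1-3*M)*(1-4*M) :: 'a)"
  have arec: "a (Suc kk) = inverse (of_nat (Suc kk) * M) * (a kk * (-N) - M * (-N * of_nat kk * a kk))" for kk
    unfolding a_def HPf_at1 cN1 ..
  have a0: "a 0 = (N*vM)^0 * t * C 0" unfolding a_def t_def C_def using nz120 by (simp add: HPf.simps(1))
  have a1: "a (Suc 0) = (N*vM)^(Suc 0) * t * C (Suc 0)"
    by (rule astep[OF arec[of 0] a0 _ Mv smallnz]) (simp_all add: C_def)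
  have a1': "a 1 = (N*vM)^1 * t * C 1" using a1 by (simp only: One_nat_def)
  have a2: "a (Suc 1) = (N*vM)^(Suc 1) * t * C (Suc 1)"
    by (rule astep[OF arec[of 1] a1' _ Mv smallnz]) (use a1 in \<open>simp_all add: C_def algebra_simps\<close>)
  have a2': "a 2 = (N*vM)^2 * t * C 2" proof - have e: "Suc 1 = (2::nat)" by simp show ?thesis using a2 unfolding e . qed
  have a3: "a (Suc 2) = (N*vM)^(Suc 2) * t * C (Suc 2)"
    by (rule astep[OF arec[of 2] a2' _ Mv smallnz]) (use a2 in \<open>simp_all add: C_def algebra_simps\<close>)
  have a3': "a 3 = (N*vM)^3 * t * C 3" proof - have e: "Suc 2 = (3::nat)" by simp show ?thesis using a3 unfolding e . qed
  have a4: "a (Suc 3) = (N*vM)^(Suc 3) * t * C (Suc 3)"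
    by (rule astep[OF arec[of 3] a3' _ Mv smallnz]) (use a3 in \<open>simp_all add: C_def algebra_simps\<close>)
  have a4': "a 4 = (N*vM)^4 * t * C 4" proof - have e: "Suc 3 = (4::nat)" by simp show ?thesis using a4 unfolding e . qed
  have a5: "a (Suc 4) = (N*vM)^(Suc 4) * t * C (Suc 4)"
    by (rule astep[OF arec[of 4] a4' _ Mv smallnz]) (use a4 in \<open>simp_all add: C_def algebra_simps\<close>)
  have aa: "a i = (N*vM)^i * (t * C i)" if "1 \<le> i" "i \<le> 5" for i
  proof -
    have "i = Suc 0 \<or> i = Suc 1 \<or> i = Suc 2 \<or> i = Suc 3 \<or> i = Suc 4" using that by auto
    then show ?thesis using a1 a2 a3 a4 a5 by (auto simp only: mult.assoc)
  qed
  have "Phi a = Phi (\<lambda>i. (N*vM)^i * (t * C i))"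
    by (rule Phi_cong) (rule aa)
  also have "\<dots> = (N*vM)^11 * (t^4 * Phi C)" by (simp add: Phi_weight Phi_scale)
  also have "Phi C = -48000*(1-M)^4*(1+M)*(1-2*M)*(2-M)"
    by (subst Phi_C[symmetric], rule Phi_cong) (auto simp: C_def)
  finally have "(N*vM)^11 * (t^4 * (-48000*(1-M)^4*(1+M)*(1-2*M)*(2-M))) = 0" using Pa by simp
  then have "(1-M)^4*(1+M)*(1-2*M)*(2-M) = 0"
    using N0 M0 nz120 nz48000 unfolding vM_def t_def by simp
  then have "1 - M = 0 \<or> 1 + M = 0 \<or> 1 - 2*M = 0 \<or> 2 - M = 0" by simp
  then have "M - 1 = 0 \<or> M + 1 = 0 \<or> M - 2 = 0 \<or> 2*M - 1 = 0"
    by (auto simp: algebra_simps eq_neg_iff_add_eq_0)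
  then show ?thesis by auto
qed

lemma final_N:
  fixes N M :: "'a::field" and cN :: "nat \<Rightarrow> 'a"
  assumes Q0: "Phi (\<lambda>i. HPf cN M i) = 0" and N0: "N \<noteq> 0" and M0: "M \<noteq> 0"
    and nz48000: "(48000::'a) \<noteq> 0"
    and smallnz: "\<And>j. 0 < j \<Longrightarrow> j \<le> 5 \<Longrightarrow> (of_nat j :: 'a) \<noteq> 0"
    and c1: "cN 1 = N" and c2: "2 * cN 2 = (N - 1) * cN 1" and c3: "3 * cN 3 = (N - 2) * cN 2"
    and c4: "4 * cN 4 = (N - 3) * cN 3" and c5: "5 * cN 5 = (N - 4) * cN 4"
  shows "(N-1)*(N+1)*(N-2)*(2*N-1) = 0"
proof -
  define X where "X = ([:0,1:] :: 'a poly)"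
  have ex: "\<exists>q. HPf cN M i = X * q" if "1 \<le> i" for i
  proof -
    have "poly (HPf cN M i) (- 0) = 0" using HPf_at0[OF that] by simp
    then have "[:0,1:] dvd HPf cN M i" by (subst dvd_iff_poly_eq_0)
    then show ?thesis unfolding X_def by (auto elim!: dvdE)
  qed
  then obtain Cp where Cp: "\<And>i. 1 \<le> i \<Longrightarrow> HPf cN M i = X * Cp i" by metis
  have "Phi (\<lambda>i. HPf cN M i) = Phi (\<lambda>i. X * Cp i)" by (rule Phi_cong) (simp add: Cp)
  then have "X^4 * Phi Cp = 0" using Q0 by (simp add: Phi_scale)
  then have "Phi Cp = 0" unfolding X_def by simp
  then have "poly (Phi Cp) 0 = 0" by simp
  then have P0: "Phi (\<lambda>i. poly (Cp i) 0) = 0" by (simp only: poly_Phi)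
  define vM where "vM = inverse M"
  have cp: "poly (Cp i) 0 = vM * (- cN i)" if "1 \<le> i" "i \<le> 5" for i
  proof -
    define kk where "kk = i - 1"
    have i: "i = Suc kk" using that(1) unfolding kk_def by simp
    have "poly (pderiv (HPf cN M i)) 0 = poly (Cp i) 0"
      unfolding Cp[OF that(1)] X_def by (simp add: pderiv_mult pderiv_pCons)
    moreover have "poly (pderiv (HPf cN M i)) 0 = vM * (- cN i)"
      unfolding i HPf_d0 vM_def using smallnz[of "Suc kk"] that i M0
      by (simp add: inverse_mult_distrib del: of_nat_Suc)
    ultimately show ?thesis by simp
  qed
  have "Phi (\<lambda>i. poly (Cp i) 0) = Phi (\<lambda>i. vM * (- cN i))" by (rule Phi_cong) (simp add: cp)
  also have "\<dots> = vM^4 * Phi (\<lambda>i. - cN i)" by (rule Phi_scale)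
  finally have "vM^4 * Phi (\<lambda>i. - cN i) = 0" using P0 by simp
  then have Pm: "Phi (\<lambda>i. - cN i) = 0" using M0 unfolding vM_def by simp
  have f3: "6 * cN 3 = (N - 2) * ((N - 1) * N)"
  proof -
    have "6 * cN 3 = 2 * (3 * cN 3)" by simp
    also have "\<dots> = (N - 2) * (2 * cN 2)" unfolding c3 by (simp add: algebra_simps)
    finally show ?thesis unfolding c2 c1 .
  qed
  have f4: "24 * cN 4 = (N - 3) * ((N - 2) * ((N - 1) * N))"
  proof -
    have "24 * cN 4 = 6 * (4 * cN 4)" by simp
    also have "\<dots> = (N - 3) * (6 * cN 3)" unfolding c4 by (simp add: algebra_simps)
    finally show ?thesis unfolding f3 .
  qed
  have f5: "120 * cN 5 = (N - 4) * ((N - 3) * ((N - 2) * ((N - 1) * N)))"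
  proof -
    have "120 * cN 5 = 24 * (5 * cN 5)" by simp
    also have "\<dots> = (N - 4) * (24 * cN 4)" unfolding c5 by (simp add: algebra_simps)
    finally show ?thesis unfolding f4 .
  qed
  have e2: "120 * cN 2 = 60 * ((N - 1) * N)"
  proof -
    have "120 * cN 2 = 60 * (2 * cN 2)" by simp
    then show ?thesis unfolding c2 c1 .
  qed
  have e3: "120 * cN 3 = 20 * ((N - 2) * ((N - 1) * N))"
  proof -
    have "120 * cN 3 = 20 * (6 * cN 3)" by simp
    then show ?thesis unfolding f3 .
  qed
  have e4: "120 * cN 4 = 5 * ((N - 3) * ((N - 2) * ((N - 1) * N)))"
  proof -
    have "120 * cN 4 = 5 * (24 * cN 4)" by simp
    then show ?thesis unfolding f4 .
  qed
  have "Phi (\<lambda>i. (-120) * (- cN i)) = (-120)^4 * Phi (\<lambda>i. - cN i)" by (rule Phi_scale)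
  also have "Phi (\<lambda>i. (-120) * (- cN i)) = Phi (\<lambda>i. if i = 1 then 120*N else if i = 2 then 60*N*(N-1) else if i = 3 then 20*N*(N-1)*(N-2)
     else if i = 4 then 5*N*(N-1)*(N-2)*(N-3) else N*(N-1)*(N-2)*(N-3)*(N-4))"
  proof (rule Phi_cong)
    fix i :: nat assume "1 \<le> i" "i \<le> 5"
    then have "i = 1 \<or> i = 2 \<or> i = 3 \<or> i = 4 \<or> i = 5" by auto
    then show "-120 * - cN i = (if i = 1 then 120*N else if i = 2 then 60*N*(N-1) else if i = 3 then 20*N*(N-1)*(N-2)
     else if i = 4 then 5*N*(N-1)*(N-2)*(N-3) else N*(N-1)*(N-2)*(N-3)*(N-4))"
      using e2 e3 e4 f5 c1 by (auto simp: algebra_simps)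
  qed
  also note Phi_E
  finally have "48000*N^4*(N-1)^4*(N+1)*(N-2)*(2*N-1) = 0" using Pm by simp
  then show ?thesis using N0 nz48000 by simp
qed

theorem proposition3p1:
  fixes p h q n m :: nat
    and k :: "'K::field set" and x y :: 'K and D :: "nat \<Rightarrow> 'K \<Rightarrow> 'K"
  assumes "prime p" and "p > 5" and "h \<ge> 1" and "q = p ^ h"
    and "n \<ge> m" and "m > 2" and "\<not> p dvd (m * n)"
    and "fermat_function_field p n m k x y"
    and "hasse_derivatives k x D"
    and "nonclassical_conics D x y"
  shows "p dvd (2 * n - 1) * (n + 1) * (n - 2) * (n - 1)
       \<and> p dvd (2 * m - 1) * (m + 1) * (m - 2) * (m - 1)"
proof -
  note pp = assms(1) and p5 = assms(2) and nm = assms(5) and m2 = assms(6) and ndvd = assms(7)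
  note hs = assms(9)
  have charK: "CHAR('K) = p" and acs: "alg_closed_subfield k" and tr: "transcendental_over k x"
    and fe: "x ^ n + y ^ m = 1"
    using assms(8) unfolding fermat_function_field_def by auto
  have sf: "is_subfield k" using acs unfolding alg_closed_subfield_def by auto
  have ofz: "(of_nat a :: 'K) = 0 \<longleftrightarrow> p dvd a" for a
    using of_nat_eq_0_iff_char_dvd[where 'a='K] charK by simp
  have one: "1 \<in> k" by (rule sf1[OF sf])
  define N where "N = (of_nat n :: 'K)"
  define M where "M = (of_nat m :: 'K)"
  define cN where "cN = (\<lambda>j. (of_nat (n choose j) :: 'K))"
  have pn: "\<not> p dvd n" and pm: "\<not> p dvd m" using ndvd by auto
  have N0: "N \<noteq> 0" unfolding N_def using ofz pn by simp
  have M0: "M \<noteq> 0" unfolding M_def using ofz pm by simp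
  have smallnz: "(of_nat j :: 'K) \<noteq> 0" if "0 < j" "j \<le> 5" for j
    using ofz[of j] that p5 by (auto dest: dvd_imp_le)
  have nz120: "(120 :: 'K) \<noteq> 0"
  proof
    assume "(120 :: 'K) = 0"
    then have "(of_nat (2^3 * 3^1 * 5^1) :: 'K) = 0" by simp
    then show False using ofz no_small_dvd[OF pp p5] by blast
  qed
  have nz48000: "(48000 :: 'K) \<noteq> 0"
  proof
    assume "(48000 :: 'K) = 0"
    then have "(of_nat (2^7 * 3^1 * 5^3) :: 'K) = 0" by simp
    then show False using ofz no_small_dvd[OF pp p5] by blast
  qed
  have n0: "n > 0" and m0: "m \<ge> 1" using nm m2 by auto
  have x0: "x \<noteq> 0"
  proof
    assume "x = 0"
    have "[:0, 1:] = (0 :: 'K poly)"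
      by (rule trans_zero[OF sf tr]) (auto intro!: po_pCons[OF sf] sf0[OF sf] sf1[OF sf] po_0[OF sf] simp: \<open>x = 0\<close>)
    then show False by simp
  qed
  define s where "s = x ^ n"
  define w where "w = 1 - s"
  have w0: "w \<noteq> 0"
  proof
    assume "w = 0"
    have "1 - monom 1 n = (0 :: 'K poly)"
      by (rule trans_zero[OF sf tr])
         (auto intro!: po_diff[OF sf] po_1[OF sf] po_monom[OF sf] sf1[OF sf] simp: poly_monom
           \<open>w = 0\<close>[unfolded w_def s_def, symmetric])
    then have "coeff (1 - monom 1 n) 0 = (0::'K)" by simp
    then show False using n0 by simp
  qed
  have ym: "y ^ m = 1 - x ^ n" using fe by (simp add: algebra_simps)
  have y0: "y \<noteq> 0"
  proof
    assume "y = 0"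
    then have "y ^ m = 0" using m0 by simp
    then show False using ym w0 unfolding w_def s_def by simp
  qed
  define z where "z = x * w"
  have z0: "z \<noteq> 0" unfolding z_def using x0 w0 by simp
  define d where "d = (\<lambda>i. D i y)"
  define r where "r = (\<lambda>i. (if i = 0 then 1 else 0) - of_nat (n choose i) * x^(n-i) :: 'K)"
  define hh where "hh = (\<lambda>i. d i * z^i / y)"
  define \<rho> where "\<rho> = (\<lambda>i. r i * z^i / w)"
  have r0: "r 0 = w" unfolding r_def w_def s_def by simp
  have EQ: "(\<Sum>i\<le>kk. d i * of_nat (Suc (kk-i)) * r (Suc (kk-i)))
        = M * (\<Sum>i\<le>kk. r i * of_nat (Suc (kk-i)) * d (Suc (kk-i)))" if "kk \<le> 4" for kk
    unfolding d_def r_def M_def by (rule series_eqs[OF hs one ym m0 that])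
  have REC: "hh (Suc kk) = ((\<Sum>i\<le>kk. hh i * of_nat (Suc (kk-i)) * \<rho> (Suc (kk-i)))
          - M * (\<Sum>i\<in>{1..kk}. \<rho> i * of_nat (Suc (kk-i)) * hh (Suc (kk-i)))) / (of_nat (Suc kk) * M)"
    if "kk \<le> 4" for kk
    by (rule step_rec[OF M0 smallnz w0 y0 z0 _ _ r0 EQ[OF that]]) (use that in \<open>simp_all add: hh_def \<rho>_def\<close>)
  have hh0: "hh 0 = 1" unfolding hh_def d_def using hasse_D0[OF hs] y0 by simp
  have xpow: "cN j * x^(n-j) * x^j = cN j * s" for j
  proof (cases "j \<le> n")
    case True then show ?thesis unfolding s_def by (simp add: power_add[symmetric] mult.assoc)
  next
    case False then show ?thesis unfolding cN_def by (simp add: binomial_eq_0)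
  qed
  have RHO: "\<rho> j = poly (rhoP cN j) s" if "j \<le> 5" for j
  proof (cases j)
    case 0 then show ?thesis unfolding \<rho>_def rhoP_def using r0 w0 by simp
  next
    case (Suc j')
    have "\<rho> j = - (cN j * x^(n-j) * x^j) * w^j' "
      unfolding \<rho>_def r_def z_def Suc cN_def using w0 by (simp add: power_mult_distrib field_simps)
    also have "\<dots> = poly (rhoP cN j) s" unfolding xpow rhoP_def Suc w_def by simp
    finally show ?thesis .
  qed
  have HP: "poly (HPf cN M K) s = hh K" if "K \<le> 5" for K
    by (rule poly_HPf[OF hh0 REC RHO that])
  have W0: "conic_wronskian D x y (\<lambda>i. i) = 0" by (rule nonclassical_W0[OF assms(10)])
  define v where "v = inverse z"
  have dv: "d i = y * hh i * v^i" for i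
    unfolding hh_def v_def using y0 z0 by (simp add: field_simps power_inverse)
  have WF: "conic_wronskian D x y (\<lambda>i. i) =
    - (d 3 * ((x * d 4 + d 3) * (2*d 0*d 5 + 2*d 1*d 4 + 2*d 2*d 3) - (x * d 5 + d 4) * (2*d 0*d 4 + 2*d 1*d 3 + d 2*d 2))
     - d 4 * ((x * d 3 + d 2) * (2*d 0*d 5 + 2*d 1*d 4 + 2*d 2*d 3) - (x * d 5 + d 4) * (2*d 0*d 3 + 2*d 1*d 2))
     + d 5 * ((x * d 3 + d 2) * (2*d 0*d 4 + 2*d 1*d 3 + d 2*d 2) - (x * d 4 + d 3) * (2*d 0*d 3 + 2*d 1*d 2)))"
    unfolding d_def by (rule wronskian_formula[OF hs one])
  have "y^4 * v^11 * Phi hh = 0"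
    using W0 unfolding WF det_scale[OF dv hh0] by simp
  then have Phh: "Phi hh = 0" using y0 z0 unfolding v_def by simp
  define Q where "Q = Phi (\<lambda>i. HPf cN M i)"
  have "poly Q s = Phi hh" unfolding Q_def poly_Phi by (rule Phi_cong) (simp add: HP)
  then have Qs: "poly Q (x^n) = 0" using Phh unfolding s_def by simp
  have cNk: "cN j \<in> k" for j unfolding cN_def by (rule sf_of_nat[OF sf])
  have Mk: "M \<in> k" unfolding M_def by (rule sf_of_nat[OF sf])
  have Qk: "poly_over k Q" unfolding Q_def by (intro po_Phi[OF sf] po_HPf[OF sf] cNk Mk)
  have Q0: "Q = 0" by (rule trans_pow_zero[OF sf tr n0 Qk Qs])
  have PQ: "Phi (\<lambda>i. HPf cN M i) = 0" using Q0 unfolding Q_def .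
  have c1: "cN 1 = N" unfolding cN_def N_def by (simp add: eval_nat_numeral)
  have c2: "2 * cN 2 = (N - 1) * cN 1" using cN_rec[of 1 n, where 'a='K] unfolding cN_def N_def by (simp add: eval_nat_numeral)
  have c3: "3 * cN 3 = (N - 2) * cN 2" using cN_rec[of 2 n, where 'a='K] unfolding cN_def N_def by (simp add: eval_nat_numeral)
  have c4: "4 * cN 4 = (N - 3) * cN 3" using cN_rec[of 3 n, where 'a='K] unfolding cN_def N_def by (simp add: eval_nat_numeral)
  have c5: "5 * cN 5 = (N - 4) * cN 4" using cN_rec[of 4 n, where 'a='K] unfolding cN_def N_def by (simp add: eval_nat_numeral)
  have Nc: "(N-1)*(N+1)*(N-2)*(2*N-1) = 0"
    by (rule final_N[OF PQ N0 M0 nz48000 smallnz c1 c2 c3 c4 c5])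
  have Mc: "(M-1)*(M+1)*(M-2)*(2*M-1) = 0"
    by (rule final_M[OF PQ N0 M0 nz120 nz48000 smallnz c1])
  have n3: "n \<ge> 3" and m3: "m \<ge> 3" using nm m2 by auto
  have "(of_nat ((2 * n - 1) * (n + 1) * (n - 2) * (n - 1)) :: 'K) = (2*N-1)*(N+1)*(N-2)*(N-1)"
  proof -
    have f1: "(of_nat (2 * n - 1) :: 'K) = 2 * N - 1" using n3 unfolding N_def by (simp add: of_nat_diff)
    have f2: "(of_nat (n + 1) :: 'K) = N + 1" unfolding N_def by simp
    have f3: "(of_nat (n - 2) :: 'K) = N - 2" using n3 unfolding N_def by (simp add: of_nat_diff)
    have f4: "(of_nat (n - 1) :: 'K) = N - 1" using n3 unfolding N_def by (simp add: of_nat_diff)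
    show ?thesis by (simp only: of_nat_mult f1 f2 f3 f4)
  qed
  also have "\<dots> = 0" using Nc by (simp add: algebra_simps)
  finally have A: "p dvd (2 * n - 1) * (n + 1) * (n - 2) * (n - 1)" using ofz by blast
  have "(of_nat ((2 * m - 1) * (m + 1) * (m - 2) * (m - 1)) :: 'K) = (2*M-1)*(M+1)*(M-2)*(M-1)"
  proof -
    have f1: "(of_nat (2 * m - 1) :: 'K) = 2 * M - 1" using m3 unfolding M_def by (simp add: of_nat_diff)
    have f2: "(of_nat (m + 1) :: 'K) = M + 1" unfolding M_def by simp
    have f3: "(of_nat (m - 2) :: 'K) = M - 2" using m3 unfolding M_def by (simp add: of_nat_diff)
    have f4: "(of_nat (m - 1) :: 'K) = M - 1" using m3 unfolding M_def by (simp add: of_nat_diff)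
    show ?thesis by (simp only: of_nat_mult f1 f2 f3 f4)
  qed
  also have "\<dots> = 0" using Mc by (simp add: algebra_simps)
  finally have B: "p dvd (2 * m - 1) * (m + 1) * (m - 2) * (m - 1)" using ofz by blast
  show ?thesis using A B by blast
qed

end
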